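(* Let $K$ be a field and let $f\colon\mathbb Z^k\to K$ be a hypergeometric term on $\mathbb Z^k$ that is a zero divisor. Then for each $\vec v\in\mathbb Z^k$ there exist nonzero polynomials $A_{\vec v},B_{\vec v}\in K[z_1,\dots,z_k]$ such that $A_{\vec v}f=B_{\vec v}f^{\vec v}$ (pointwise on $\mathbb Z^k$), and the rational functions $R_{\vec v}=A_{\vec v}/B_{\vec v}$ satisfy $R_{\vec v}R_{\vec w}^{\vec v}=R_{\vec w}R_{\vec v}^{\vec w}$ for all $\vec v,\vec w\in\mathbb Z^k$.
   Context: For a function or rational function $g$ on $\mathbb Z^k$ and $\vec v\in\mathbb Z^k$, $g^{\vec v}(\vec z)=g(\vec z+\vec v)$. A hypergeometric term on $\mathbb Z^k$ over $K$ is a function $f\colon\mathbb Z^k\to K$ such that for each $i\in\{1,\dots,k\}$ there are nonzero polynomials $A_i,B_i\in K[\vec z]$ with $A_i(\vec z)f(\vec z)=B_i(\vec z)f(\vec z+\vec e_i)$ for all $\vec z\in\mathbb Z^k$. $f$ is a zero divisor if there is a nonzero polynomial $p$ with $p(\vec z)f(\vec z)=0$ for all $\vec z$. *)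

theory Defs
  imports Main "HOL-Library.Poly_Mapping"
begin

(* Multivariate polynomials over K in variables z_i, i :: 'n (a finite index type,
  k = CARD('n)), represented as finitely supported maps from exponent vectors
  ('n \<Rightarrow>\<^sub>0 nat) to coefficients. *)

type_synonym ('n, 'a) mpoly = "('n \<Rightarrow>\<^sub>0 nat) \<Rightarrow>\<^sub>0 'a"

definition mono_eval :: "('n::finite \<Rightarrow>\<^sub>0 nat) \<Rightarrow> ('n \<Rightarrow> int) \<Rightarrow> 'a::field" where
  "mono_eval m z = (\<Prod>i\<in>UNIV. (of_int (z i)) ^ Poly_Mapping.lookup m i)"

definition peval :: "('n::finite, 'a::field) mpoly \<Rightarrow> ('n \<Rightarrow> int) \<Rightarrow> 'a" where
  "peval p z = (\<Sum>m\<in>Poly_Mapping.keys p. Poly_Mapping.lookup p m * mono_eval m z)"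

definition pVar :: "'n \<Rightarrow> ('n, 'a::field) mpoly" where
  "pVar i = Poly_Mapping.single (Poly_Mapping.single i 1) 1"

definition pConst :: "'a::field \<Rightarrow> ('n, 'a) mpoly" where
  "pConst c = Poly_Mapping.single 0 c"

definition pshift :: "('n::finite, 'a::field) mpoly \<Rightarrow> ('n \<Rightarrow> int) \<Rightarrow> ('n, 'a) mpoly" where
  "pshift p v = (\<Sum>m\<in>Poly_Mapping.keys p. pConst (Poly_Mapping.lookup p m) *
       (\<Prod>i\<in>UNIV. (pVar i + pConst (of_int (v i))) ^ Poly_Mapping.lookup m i))"

definition unitvec :: "'n \<Rightarrow> 'n \<Rightarrow> int" where
  "unitvec i = (\<lambda>j. if j = i then 1 else 0)"

definition vadd :: "('n \<Rightarrow> int) \<Rightarrow> ('n \<Rightarrow> int) \<Rightarrow> 'n \<Rightarrow> int" where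
  "vadd z v = (\<lambda>j. z j + v j)"

definition hypergeometric_term :: "(('n::finite \<Rightarrow> int) \<Rightarrow> 'a::field) \<Rightarrow> bool" where
  "hypergeometric_term f \<longleftrightarrow>
     (\<forall>i. \<exists>A B :: ('n, 'a) mpoly. A \<noteq> 0 \<and> B \<noteq> 0 \<and>
        (\<forall>z. peval A z * f z = peval B z * f (vadd z (unitvec i))))"

definition zero_divisor :: "(('n::finite \<Rightarrow> int) \<Rightarrow> 'a::field) \<Rightarrow> bool" where
  "zero_divisor f \<longleftrightarrow> (\<exists>p :: ('n, 'a) mpoly. p \<noteq> 0 \<and> (\<forall>z. peval p z * f z = 0))"

end

theory Submission
  imports Defs
begin

definition mon :: "('n::finite \<Rightarrow> 'b::comm_ring_1) \<Rightarrow> ('n \<Rightarrow>\<^sub>0 nat) \<Rightarrow> 'b" where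
  "mon g m = (\<Prod>i\<in>UNIV. g i ^ Poly_Mapping.lookup m i)"

definition ev :: "('a::comm_ring_1 \<Rightarrow> 'b::comm_ring_1) \<Rightarrow> ('n::finite \<Rightarrow> 'b) \<Rightarrow> (('n \<Rightarrow>\<^sub>0 nat) \<Rightarrow>\<^sub>0 'a) \<Rightarrow> 'b" where
  "ev h g p = (\<Sum>m\<in>Poly_Mapping.keys p. h (Poly_Mapping.lookup p m) * mon g m)"

lemma expand: "p = (\<Sum>m\<in>Poly_Mapping.keys p. Poly_Mapping.single m (Poly_Mapping.lookup p m))"
proof -
  have *: "finite I \<Longrightarrow> Poly_Mapping.lookup (\<Sum>m\<in>I. Poly_Mapping.single m (Poly_Mapping.lookup p m)) j =
            (if j \<in> I then Poly_Mapping.lookup p j else 0)" for I j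
    by (induction I rule: finite_induct) (auto simp: lookup_single lookup_add when_def)
  show ?thesis
    by (rule poly_mapping_eqI) (simp add: * in_keys_iff)
qed

lemma mon_add: "mon g (a + b) = mon g a * mon g b"
  by (simp add: mon_def lookup_add power_add prod.distrib)

lemma mon_zero: "mon g 0 = 1"
  by (simp add: mon_def)

locale rhom =
  fixes h :: "'a::field \<Rightarrow> 'b::comm_ring_1"
  assumes h0: "h 0 = 0" and h1: "h 1 = 1" and hadd: "h (x + y) = h x + h y"
    and hmult: "h (x * y) = h x * h y"
begin

lemma ev_superset:
  assumes "finite S" "Poly_Mapping.keys p \<subseteq> S"
  shows "ev h g p = (\<Sum>m\<in>S. h (Poly_Mapping.lookup p m) * mon g m)"
  unfolding ev_def
  by (rule sum.mono_neutral_left) (use assms in \<open>auto simp: h0 in_keys_iff\<close>)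

lemma ev_add: "ev h g (p + q) = ev h g p + ev h g q"
proof -
  let ?S = "Poly_Mapping.keys p \<union> Poly_Mapping.keys q \<union> Poly_Mapping.keys (p + q)"
  have f: "finite ?S" by simp
  have s1: "Poly_Mapping.keys p \<subseteq> ?S" and s2: "Poly_Mapping.keys q \<subseteq> ?S"
    and s3: "Poly_Mapping.keys (p+q) \<subseteq> ?S" by auto
  show ?thesis
    using ev_superset[OF f s1, of g] ev_superset[OF f s2, of g] ev_superset[OF f s3, of g]
    by (simp add: lookup_add hadd distrib_right sum.distrib)
qed

lemma ev_zero: "ev h g 0 = 0"
  by (simp add: ev_def)

lemma ev_sum: "ev h g (\<Sum>x\<in>A. F x) = (\<Sum>x\<in>A. ev h g (F x))"
  by (induction A rule: infinite_finite_induct) (auto simp: ev_zero ev_add)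

lemma ev_single: "ev h g (Poly_Mapping.single m c) = h c * mon g m"
  using ev_superset[of "{m}" "Poly_Mapping.single m c" g]
  by simp

lemma ev_mult: "ev h g (p * q) = ev h g p * ev h g q"
proof -
  have "p * q = (\<Sum>a\<in>Poly_Mapping.keys p. Poly_Mapping.single a (Poly_Mapping.lookup p a)) *
                (\<Sum>b\<in>Poly_Mapping.keys q. Poly_Mapping.single b (Poly_Mapping.lookup q b))"
    using expand[of p] expand[of q] by simp
  also have "\<dots> = (\<Sum>a\<in>Poly_Mapping.keys p. \<Sum>b\<in>Poly_Mapping.keys q.
        Poly_Mapping.single (a + b) (Poly_Mapping.lookup p a * Poly_Mapping.lookup q b))"
    by (simp add: sum_product mult_single)
  finally have "ev h g (p * q) = (\<Sum>a\<in>Poly_Mapping.keys p. \<Sum>b\<in>Poly_Mapping.keys q.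
        h (Poly_Mapping.lookup p a) * mon g a * (h (Poly_Mapping.lookup q b) * mon g b))"
    by (simp add: ev_sum ev_single hmult mon_add ac_simps)
  also have "\<dots> = ev h g p * ev h g q"
    by (simp add: ev_def sum_product)
  finally show ?thesis .
qed

lemma ev_one: "ev h g 1 = 1"
  using ev_single[where m=0 and c=1 and g=g] by (simp add: h1 mon_zero)

lemma ev_power: "ev h g (p ^ n) = ev h g p ^ n"
  by (induction n) (simp_all add: ev_one ev_mult)

lemma ev_prod: "ev h g (\<Prod>x\<in>A. F x) = (\<Prod>x\<in>A. ev h g (F x))"
  by (induction A rule: infinite_finite_induct) (auto simp: ev_one ev_mult)

lemma ev_pConst: "ev h g (pConst c) = h c"
  by (simp add: pConst_def ev_single mon_zero)

lemma ev_pVar: "ev h g (pVar i) = g i"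
proof -
  have "mon g (Poly_Mapping.single i 1) = g i"
    unfolding mon_def
    by (subst prod.remove[of UNIV i]) (auto simp: lookup_single when_def intro!: prod.neutral)
  then show ?thesis by (simp add: pVar_def ev_single h1)
qed

lemma ev_compose:
  "ev h g2 (ev pConst g1 p) = ev h (\<lambda>i. ev h g2 (g1 i)) p"
  unfolding ev_def[of pConst] mon_def
  by (simp add: ev_sum ev_mult ev_prod ev_power ev_pConst ev_def[of h "\<lambda>i. ev h g2 (g1 i)"] mon_def)

end

lemma rhom_pConst: "rhom (pConst :: 'a::field \<Rightarrow> ('n, 'a) mpoly)"
  by unfold_locales (simp_all add: pConst_def single_add mult_single)

lemma rhom_id: "rhom (\<lambda>x::'a::field. x)"
  by unfold_locales simp_all

lemma peval_ev: "peval p z = ev (\<lambda>x. x) (\<lambda>i. of_int (z i)) p"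
  by (simp add: peval_def ev_def mono_eval_def mon_def)

lemma pshift_ev: "pshift p v = ev pConst (\<lambda>i. pVar i + pConst (of_int (v i))) p"
  by (simp add: pshift_def ev_def mon_def)

lemma pConst_add: "pConst (a + b) = pConst a + pConst b"
  by (simp add: pConst_def single_add)

lemma peval_pshift: "peval (pshift p v) z = peval p (vadd z v)"
  for p :: "('n::finite, 'a::field) mpoly"
proof -
  interpret r: rhom "\<lambda>x::'a. x" by (rule rhom_id)
  interpret r2: rhom "pConst :: 'a \<Rightarrow> ('n, 'a) mpoly" by (rule rhom_pConst)
  show ?thesis
    unfolding peval_ev pshift_ev r.ev_compose
    by (simp add: r.ev_add r.ev_pVar r.ev_pConst vadd_def)
qed

lemma pshift_pshift: "pshift (pshift p v) w = pshift p (\<lambda>i. v i + w i)"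
  for p :: "('n::finite, 'a::field) mpoly"
proof -
  interpret r2: rhom "pConst :: 'a \<Rightarrow> ('n, 'a) mpoly" by (rule rhom_pConst)
  show ?thesis
    unfolding pshift_ev r2.ev_compose
    by (simp add: r2.ev_add r2.ev_pVar r2.ev_pConst pConst_add add_ac)
qed

lemma mon_pVar: "mon pVar m = Poly_Mapping.single m (1::'a::field)"
proof -
  have pw: "(pVar i :: ('n, 'a) mpoly) ^ n = Poly_Mapping.single (Poly_Mapping.single i n) 1" for i n
    by (induction n) (simp_all add: pVar_def mult_single single_add[symmetric] add.commute)
  have pr: "(\<Prod>i\<in>A. Poly_Mapping.single (F i) (1::'a)) = Poly_Mapping.single (\<Sum>i\<in>A. F i) 1"
    for A and F :: "'n \<Rightarrow> ('n \<Rightarrow>\<^sub>0 nat)"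
    by (induction A rule: infinite_finite_induct) (simp_all add: mult_single)
  have m: "(\<Sum>i\<in>UNIV. Poly_Mapping.single i (Poly_Mapping.lookup m i)) = m"
  proof (rule poly_mapping_eqI)
    fix j
    show "Poly_Mapping.lookup (\<Sum>i\<in>UNIV. Poly_Mapping.single i (Poly_Mapping.lookup m i)) j = Poly_Mapping.lookup m j"
      by (simp add: lookup_sum lookup_single when_def)
  qed
  show ?thesis unfolding mon_def pw pr m ..
qed

lemma pshift_zero: "pshift p (\<lambda>i. 0) = (p :: ('n::finite, 'a::field) mpoly)"
proof -
  interpret r2: rhom "pConst :: 'a \<Rightarrow> ('n, 'a) mpoly" by (rule rhom_pConst)
  have "pshift p (\<lambda>i. 0) = ev pConst pVar p"
    by (simp add: pshift_ev pConst_def)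
  also have "\<dots> = (\<Sum>m\<in>Poly_Mapping.keys p. Poly_Mapping.single m (Poly_Mapping.lookup p m))"
    by (simp add: ev_def mon_pVar pConst_def mult_single)
  also have "\<dots> = p" using expand[of p] by simp
  finally show ?thesis .
qed

lemma pshift_nonzero:
  assumes "p \<noteq> 0" shows "pshift (p :: ('n::finite, 'a::field) mpoly) v \<noteq> 0"
proof
  assume "pshift p v = 0"
  then have "pshift (pshift p v) (\<lambda>i. - v i) = pshift 0 (\<lambda>i. - v i)" by simp
  moreover have "pshift (0::('n, 'a) mpoly) (\<lambda>i. - v i) = 0" by (simp add: pshift_def)
  ultimately have "p = 0" by (simp add: pshift_pshift pshift_zero)
  with assms show False by simp
qed

theorem propositionB8:
  fixes f :: "('n::finite \<Rightarrow> int) \<Rightarrow> 'a::field"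
  assumes "hypergeometric_term f" and "zero_divisor f"
  shows "\<exists>A B :: ('n \<Rightarrow> int) \<Rightarrow> ('n, 'a) mpoly.
           (\<forall>v. A v \<noteq> 0 \<and> B v \<noteq> 0 \<and>
                (\<forall>z. peval (A v) z * f z = peval (B v) z * f (vadd z v))) \<and>
           (\<forall>v w. A v * pshift (A w) v * B w * pshift (B v) w =
                  A w * pshift (A v) w * B v * pshift (B w) v)"
proof -
  obtain p :: "('n, 'a) mpoly" where p: "p \<noteq> 0" "\<And>z. peval p z * f z = 0"
    using assms(2) unfolding zero_divisor_def by blast
  have h1: "\<forall>v. p \<noteq> 0 \<and> pshift p v \<noteq> 0 \<and>
      (\<forall>z. peval p z * f z = peval (pshift p v) z * f (vadd z v))"
    using p(1) p(2) p(2)[of "vadd _ _"] by (simp add: pshift_nonzero peval_pshift del: mult_eq_0_iff)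
  have h2: "\<forall>v w. p * pshift p v * pshift p w * pshift (pshift p v) w =
          p * pshift p w * pshift p v * pshift (pshift p w) v"
    by (simp add: pshift_pshift add.commute mult_ac)
  show ?thesis
    apply (rule exI[of _ "\<lambda>v. p"], rule exI[of _ "\<lambda>v. pshift p v"])
    using h1 h2 by simp
qed

end
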